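(* Let $w\ge 3$ and let $C_1$ be the set of vertices $x=(x_1,\dots,x_{2w})$ of the Johnson graph $J(2w,w)$ such that $(x_1,x_2,x_3,x_4,x_5)\in B$, where $B=\{(1,0,0,0,0),(1,1,0,0,0),(1,0,1,0,0),(0,0,0,1,1),(0,1,1,1,1),(0,0,1,1,1),(0,1,0,1,1),(1,1,1,0,0)\}$, and let $C_2$ be the complement of $C_1$. Then $(C_1,C_2)$ is an equitable partition with quotient matrix $\begin{pmatrix} w^2-3w+2 & 3w-2\\ w & w^2-w\end{pmatrix}$.
   Context: The Johnson graph $J(n,w)$ has as vertices the binary vectors of length $n$ with exactly $w$ ones; two vertices are adjacent iff they have exactly $w-1$ common ones. A partition $(C_1,C_2)$ of the vertex set is equitable with quotient matrix $S=(s_{ij})$ if every vertex of $C_i$ has exactly $s_{ij}$ neighbours in $C_j$. *)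

theory Defs
  imports Main
begin

text \<open>Binary vectors of length n are lists over {0,1}; position i (0-based) holds x_(i+1).\<close>

definition ones :: "nat list \<Rightarrow> nat set" where
  "ones x = {i. i < length x \<and> x ! i = 1}"

definition johnson_vertices :: "nat \<Rightarrow> nat \<Rightarrow> nat list set" where
  "johnson_vertices n w =
     {x. length x = n \<and> set x \<subseteq> {0, 1} \<and> card (ones x) = w}"

definition johnson_adj :: "nat \<Rightarrow> nat list \<Rightarrow> nat list \<Rightarrow> bool" where
  "johnson_adj w x y \<longleftrightarrow> card (ones x \<inter> ones y) = w - 1"

definition equitable_partition ::
  "'v set \<Rightarrow> ('v \<Rightarrow> 'v \<Rightarrow> bool) \<Rightarrow> nat \<Rightarrow> (nat \<Rightarrow> 'v set) \<Rightarrow> (nat \<Rightarrow> nat \<Rightarrow> nat) \<Rightarrow> bool" where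
  "equitable_partition V adj m P S \<longleftrightarrow>
     (\<Union>i\<in>{1..m}. P i) = V \<and>
     (\<forall>i\<in>{1..m}. P i \<noteq> {}) \<and>
     (\<forall>i\<in>{1..m}. \<forall>j\<in>{1..m}. i \<noteq> j \<longrightarrow> P i \<inter> P j = {}) \<and>
     (\<forall>i\<in>{1..m}. \<forall>j\<in>{1..m}. \<forall>x\<in>P i. card {y\<in>P j. adj x y} = S i j)"

definition B_set :: "nat list set" where
  "B_set = {[1,0,0,0,0],[1,1,0,0,0],[1,0,1,0,0],[0,0,0,1,1],
            [0,1,1,1,1],[0,0,1,1,1],[0,1,0,1,1],[1,1,1,0,0]}"

definition C1 :: "nat \<Rightarrow> nat list set" where
  "C1 w = {x \<in> johnson_vertices (2*w) w. take 5 x \<in> B_set}"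

definition C2 :: "nat \<Rightarrow> nat list set" where
  "C2 w = johnson_vertices (2*w) w - C1 w"

end

theory Submission
  imports Defs
begin

definition swap :: "nat list \<Rightarrow> nat \<Rightarrow> nat \<Rightarrow> nat list" where
  "swap x i j = x[i:=0, j:=1]"

lemma ones_finite: "finite (ones x)" unfolding ones_def by auto
lemma ones_sub: "ones x \<subseteq> {..<length x}" unfolding ones_def by auto

lemma ones_swap:
  assumes "i \<in> ones x" "j < length x" "j \<notin> ones x"
  shows "ones (swap x i j) = ones x - {i} \<union> {j}"
  using assms unfolding ones_def swap_def by (auto simp: nth_list_update)

lemma set_swap: "set x \<subseteq> {0,1} \<Longrightarrow> set (swap x i j) \<subseteq> {0,1}"
  unfolding swap_def
  by (metis (no_types, lifting) insert_subset set_update_subset_insert subset_insertI subset_trans insertI1 insertI2)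

lemma length_swap[simp]: "length (swap x i j) = length x" by (simp add: swap_def)

lemma list01_eq:
  assumes "length x = length y" "set x \<subseteq> {0,1}" "set y \<subseteq> {0,1}" "ones x = ones y"
  shows "x = y"
proof (rule nth_equalityI)
  show "length x = length y" by fact
  fix k assume k: "k < length x"
  have "x ! k \<in> {0,1}" using assms(2) k nth_mem by blast
  moreover have "y ! k \<in> {0,1}" using assms(1,3) k nth_mem by (metis subsetD)
  moreover have "k \<in> ones x \<longleftrightarrow> k \<in> ones y" using assms(4) by simp
  hence "(x!k = 1) = (y!k = 1)" using k assms(1) unfolding ones_def by auto
  ultimately show "x ! k = y ! k" by auto
qed

lemma nbr_count:
  assumes x: "x \<in> johnson_vertices n w" and w: "w \<ge> 1"
  shows "card {y \<in> johnson_vertices n w. Q y \<and> johnson_adj w x y}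
       = card {(i,j). i \<in> ones x \<and> j \<in> {..<n} - ones x \<and> Q (swap x i j)}"
proof -
  let ?S = "{(i,j). i \<in> ones x \<and> j \<in> {..<n} - ones x \<and> Q (swap x i j)}"
  let ?T = "{y \<in> johnson_vertices n w. Q y \<and> johnson_adj w x y}"
  let ?f = "\<lambda>(i,j). swap x i j"
  have lx: "length x = n" and sx: "set x \<subseteq> {0,1}" and cx: "card (ones x) = w"
    using x by (auto simp: johnson_vertices_def)
  have fo: "finite (ones x)" by (rule ones_finite)
  have sw: "ones (swap x i j) = ones x - {i} \<union> {j}" if "i \<in> ones x" "j < n" "j \<notin> ones x" for i j
    using ones_swap[of i x j] that lx by simp
  have inj: "inj_on ?f ?S"
  proof (rule inj_onI)
    fix p q assume p: "p \<in> ?S" and q: "q \<in> ?S" and e: "?f p = ?f q"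
    obtain i j where pij: "p = (i,j)" by (cases p)
    obtain i' j' where qij: "q = (i',j')" by (cases q)
    have h: "i \<in> ones x" "j < n" "j \<notin> ones x" "i' \<in> ones x" "j' < n" "j' \<notin> ones x"
      using p q pij qij by auto
    have "swap x i j = swap x i' j'" using e pij qij by simp
    hence eq: "ones x - {i} \<union> {j} = ones x - {i'} \<union> {j'}"
      using sw[OF h(1-3)] sw[OF h(4-6)] by simp
    have "i = i'"
    proof (rule ccontr)
      assume "i \<noteq> i'"
      hence "i \<in> ones x - {i'} \<union> {j'}" using h by auto
      hence "i \<in> ones x - {i} \<union> {j}" using eq by simp
      thus False using h by auto
    qed
    moreover have "j = j'"
    proof -
      have "j \<in> ones x - {i'} \<union> {j'}" using eq by blast
      thus ?thesis using h by auto
    qed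
    ultimately show "p = q" using pij qij by simp
  qed
  have img: "?f ` ?S = ?T"
  proof
    show "?f ` ?S \<subseteq> ?T"
    proof
      fix y assume "y \<in> ?f ` ?S"
      then obtain i j where h: "i \<in> ones x" "j < n" "j \<notin> ones x" "Q (swap x i j)"
        and y: "y = swap x i j" by auto
      have o: "ones y = ones x - {i} \<union> {j}" using sw[OF h(1-3)] y by simp
      have "card (ones x - {i}) = w - 1" using h(1) cx fo by simp
      moreover have "card (ones y) = Suc (card (ones x - {i}))" using o h fo by simp
      ultimately have cy: "card (ones y) = w" using w by simp
      have "ones x \<inter> ones y = ones x - {i}" using o h by auto
      hence adj: "johnson_adj w x y" using h(1) cx fo by (simp add: johnson_adj_def)
      show "y \<in> ?T" using cy adj h y lx sx set_swap[OF sx]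
        by (auto simp: johnson_vertices_def)
    qed
  next
    show "?T \<subseteq> ?f ` ?S"
    proof
      fix y assume yT: "y \<in> ?T"
      have ly: "length y = n" and sy: "set y \<subseteq> {0,1}" and cy: "card (ones y) = w"
        and Qy: "Q y" and adj: "card (ones x \<inter> ones y) = w - 1"
        using yT by (auto simp: johnson_vertices_def johnson_adj_def)
      have fy: "finite (ones y)" by (rule ones_finite)
      have "card (ones x - ones y) = 1"
        using card_Diff_subset_Int[of "ones x" "ones y"] fo adj cx w by (simp add: Int_commute)
      then obtain i where i: "ones x - ones y = {i}" by (meson card_1_singletonE)
      have "card (ones y - ones x) = 1"
        using card_Diff_subset_Int[of "ones y" "ones x"] fy adj cy w by (simp add: Int_commute)
      then obtain j where j: "ones y - ones x = {j}" by (meson card_1_singletonE)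
      have hi: "i \<in> ones x" using i by auto
      have hj: "j \<notin> ones x" "j \<in> ones y" using j by auto
      have jn: "j < n" using hj ones_sub[of y] ly by auto
      have oy: "ones y = ones x - {i} \<union> {j}" using i j by blast
      have "y = swap x i j"
        using list01_eq[of y "swap x i j"] ly lx sy set_swap[OF sx] oy sw[OF hi jn hj(1)] by simp
      moreover have "(i,j) \<in> ?S" using hi jn hj Qy calculation by auto
      ultimately show "y \<in> ?f ` ?S" by force
    qed
  qed
  have "bij_betw ?f ?S ?T" using inj img by (simp add: bij_betw_def)
  thus ?thesis by (simp add: bij_betw_same_card)
qed


definition BS :: "nat set set" where
  "BS = {{0},{0,1},{0,2},{3,4},{1,2,3,4},{2,3,4},{1,3,4},{0,1,2}}"
definition enc :: "nat set \<Rightarrow> nat list" where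
  "enc S = map (\<lambda>k. if k \<in> S then 1 else 0) [0..<5]"

lemma B_set_enc: "B_set = enc ` BS"
  unfolding B_set_def BS_def enc_def by code_simp

lemma BS_sub: "S \<in> BS \<Longrightarrow> S \<subseteq> {..<5}" by (auto simp: BS_def)

lemma enc_nth: "k < 5 \<Longrightarrow> enc S ! k = (if k \<in> S then 1 else 0)"
  by (simp add: enc_def)

lemma enc_inj: assumes e: "enc S = enc T" shows "S \<inter> {..<5} = T \<inter> {..<5}"
proof -
  { fix k :: nat assume k: "k < 5"
    have "enc S ! k = enc T ! k" using e by simp
    hence "(k \<in> S) = (k \<in> T)" using k by (simp add: enc_nth split: if_splits) }
  thus ?thesis by auto
qed

lemma take5_enc: assumes "length y \<ge> 5" "set y \<subseteq> {0,1}"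
  shows "take 5 y = enc (ones y \<inter> {..<5})"
proof (rule nth_equalityI)
  show "length (take 5 y) = length (enc (ones y \<inter> {..<5}))" using assms by (simp add: enc_def)
  fix k assume "k < length (take 5 y)"
  hence k: "k < 5" "k < length y" using assms by auto
  have "y ! k \<in> {0,1}" using assms(2) k nth_mem by blast
  moreover have "take 5 y ! k = y ! k" using k by simp
  moreover have "enc (ones y \<inter> {..<5}) ! k = (if k \<in> ones y then 1 else 0)"
    using k by (simp add: enc_nth)
  moreover have "k \<in> ones y \<longleftrightarrow> y ! k = 1" using k by (simp add: ones_def)
  ultimately show "take 5 y ! k = enc (ones y \<inter> {..<5}) ! k" by auto
qed

lemma take5_B: assumes "length y \<ge> 5" "set y \<subseteq> {0,1}"
  shows "(take 5 y \<in> B_set) = (ones y \<inter> {..<5} \<in> BS)"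
proof
  assume "take 5 y \<in> B_set"
  hence "enc (ones y \<inter> {..<5}) \<in> enc ` BS" by (simp only: take5_enc[OF assms] B_set_enc)
  then obtain S where S: "S \<in> BS" "enc (ones y \<inter> {..<5}) = enc S" by blast
  have "ones y \<inter> {..<5} = S \<inter> {..<5}" using enc_inj[OF S(2)] by blast
  moreover have "S \<inter> {..<5} = S" using BS_sub[OF S(1)] by auto
  ultimately show "ones y \<inter> {..<5} \<in> BS" using S by simp
next
  assume "ones y \<inter> {..<5} \<in> BS"
  hence "enc (ones y \<inter> {..<5}) \<in> enc ` BS" by (rule imageI)
  thus "take 5 y \<in> B_set" by (simp only: take5_enc[OF assms] B_set_enc)
qed

definition ca :: "nat set \<Rightarrow> nat" where
  "ca P = (\<Sum>i\<in>P. \<Sum>j\<in>{..<5}-P. if P-{i}\<union>{j} \<in> BS then 1 else 0)"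
definition cb :: "nat set \<Rightarrow> nat" where
  "cb P = (\<Sum>i\<in>P. if P - {i} \<in> BS then 1 else 0)"
definition cc :: "nat set \<Rightarrow> nat" where
  "cc P = (\<Sum>j\<in>{..<5}-P. if insert j P \<in> BS then 1 else 0)"

lemma lessThan5: "{..<5::nat} = {0,1,2,3,4}" by auto

lemma check: "\<forall>P \<in> Pow {..<5::nat}. if P \<in> BS then int (cb P) + int (cc P) = 2 \<and>
   int (ca P) + int (cb P) * (int (card P) - 5) - int (cc P) * int (card P) - int (card P) * int (card P) + 5 * int (card P) = 2
   else int (cb P) + int (cc P) = 1 \<and> int (ca P) + int (cb P) * (int (card P) - 5) - int (cc P) * int (card P) = 0"
  unfolding ca_def cb_def cc_def BS_def lessThan5 by code_simp

lemma card_filter_sum: "finite S \<Longrightarrow> card {j\<in>S. R j} = (\<Sum>j\<in>S. if R j then 1 else (0::nat))"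
  using sum.inter_filter[of S "\<lambda>_. 1::nat" R] by simp


lemma pair_count:
  fixes A N :: "nat set"
  assumes fN: "finite N" and AN: "A \<subseteq> N" and N5: "{..<5} \<subseteq> N"
  defines "P \<equiv> A \<inter> {..<5}"
  shows "card {(i,j). i \<in> A \<and> j \<in> N - A \<and> (A - {i} \<union> {j}) \<inter> {..<5} \<in> BS}
     = ca P + cb P * card (N - A - {..<5}) + cc P * card (A - P)
       + (if P \<in> BS then card (A - P) * card (N - A - {..<5}) else 0)"
proof -
  let ?R = "\<lambda>i j. (A - {i} \<union> {j}) \<inter> {..<5} \<in> BS"
  let ?g = "\<lambda>i j. if ?R i j then 1 else (0::nat)"
  define Q where "Q = {..<5::nat} - P"
  define Z where "Z = N - A - {..<5}"
  have fA: "finite A" using fN AN finite_subset by blast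
  have fZ: "finite Z" using fN by (simp add: Z_def)
  have fQ: "finite Q" by (simp add: Q_def)
  have fP: "finite P" by (simp add: P_def)
  have NA: "N - A = Q \<union> Z" "Q \<inter> Z = {}" using N5 by (auto simp: Q_def Z_def P_def)
  have AP: "A = P \<union> (A - P)" "P \<inter> (A - P) = {}" by (auto simp: P_def)
  have eq1: "{(i,j). i \<in> A \<and> j \<in> N - A \<and> ?R i j} = Sigma A (\<lambda>i. {j \<in> N - A. ?R i j})" by auto
  have "card {(i,j). i \<in> A \<and> j \<in> N - A \<and> ?R i j} = (\<Sum>i\<in>A. card {j \<in> N - A. ?R i j})"
    unfolding eq1 using fA fN by simp
  also have "\<dots> = (\<Sum>i\<in>A. \<Sum>j\<in>N - A. ?g i j)"
    by (rule sum.cong[OF refl], rule card_filter_sum, simp add: fN)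
  also have "\<dots> = (\<Sum>i\<in>A. (\<Sum>j\<in>Q. ?g i j) + (\<Sum>j\<in>Z. ?g i j))"
    unfolding NA(1) using fQ fZ NA(2) by (simp add: sum.union_disjoint)
  also have "\<dots> = (\<Sum>i\<in>P. (\<Sum>j\<in>Q. ?g i j) + (\<Sum>j\<in>Z. ?g i j))
                 + (\<Sum>i\<in>A-P. (\<Sum>j\<in>Q. ?g i j) + (\<Sum>j\<in>Z. ?g i j))"
    using AP fA fP by (metis (no_types, lifting) finite_Diff sum.union_disjoint)
  also have "(\<Sum>i\<in>P. (\<Sum>j\<in>Q. ?g i j) + (\<Sum>j\<in>Z. ?g i j))
     = (\<Sum>i\<in>P. (\<Sum>j\<in>Q. if P - {i} \<union> {j} \<in> BS then 1 else 0) + card Z * (if P - {i} \<in> BS then 1 else 0))"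
  proof (rule sum.cong[OF refl])
    fix i assume i: "i \<in> P"
    have "(\<Sum>j\<in>Q. ?g i j) = (\<Sum>j\<in>Q. if P - {i} \<union> {j} \<in> BS then 1 else 0)"
    proof (rule sum.cong[OF refl])
      fix j assume j: "j \<in> Q"
      have "(A - {i} \<union> {j}) \<inter> {..<5} = P - {i} \<union> {j}" using i j by (auto simp: P_def Q_def)
      thus "?g i j = (if P - {i} \<union> {j} \<in> BS then 1 else 0)" by simp
    qed
    moreover have "(\<Sum>j\<in>Z. ?g i j) = (\<Sum>j\<in>Z. if P - {i} \<in> BS then 1 else 0)"
    proof (rule sum.cong[OF refl])
      fix j assume j: "j \<in> Z"
      have "(A - {i} \<union> {j}) \<inter> {..<5} = P - {i}" using i j by (auto simp: P_def Z_def)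
      thus "?g i j = (if P - {i} \<in> BS then 1 else 0)" by simp
    qed
    ultimately show "(\<Sum>j\<in>Q. ?g i j) + (\<Sum>j\<in>Z. ?g i j)
      = (\<Sum>j\<in>Q. if P - {i} \<union> {j} \<in> BS then 1 else 0) + card Z * (if P - {i} \<in> BS then 1 else 0)"
      by simp
  qed
  also have "\<dots> = ca P + cb P * card Z"
    by (simp add: sum.distrib ca_def cb_def Q_def sum_distrib_left mult.commute)
  also have "(\<Sum>i\<in>A-P. (\<Sum>j\<in>Q. ?g i j) + (\<Sum>j\<in>Z. ?g i j))
     = (\<Sum>i\<in>A-P. cc P + (if P \<in> BS then card Z else 0))"
  proof (rule sum.cong[OF refl])
    fix i assume i: "i \<in> A - P"
    have "(\<Sum>j\<in>Q. ?g i j) = (\<Sum>j\<in>Q. if insert j P \<in> BS then 1 else 0)"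
    proof (rule sum.cong[OF refl])
      fix j assume j: "j \<in> Q"
      have "(A - {i} \<union> {j}) \<inter> {..<5} = insert j P" using i j by (auto simp: P_def Q_def)
      thus "?g i j = (if insert j P \<in> BS then 1 else 0)" by simp
    qed
    moreover have "(\<Sum>j\<in>Z. ?g i j) = (\<Sum>j\<in>Z. if P \<in> BS then 1 else 0)"
    proof (rule sum.cong[OF refl])
      fix j assume j: "j \<in> Z"
      have "(A - {i} \<union> {j}) \<inter> {..<5} = P" using i j by (auto simp: P_def Z_def)
      thus "?g i j = (if P \<in> BS then 1 else 0)" by simp
    qed
    ultimately show "(\<Sum>j\<in>Q. ?g i j) + (\<Sum>j\<in>Z. ?g i j) = cc P + (if P \<in> BS then card Z else 0)"
      by (simp add: cc_def Q_def)
  qed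
  also have "\<dots> = cc P * card (A - P) + (if P \<in> BS then card (A - P) * card Z else 0)"
    by (simp add: algebra_simps)
  finally show ?thesis by (simp add: Z_def)
qed

lemma ar1:
  fixes a b c k u z w :: int
  assumes "b + c = 2" "a + b*(k-5) - c*k - k*k + 5*k = 2" "u + k = w" "z + 5 - k = w"
  shows "a + b*z + c*u + u*z = w*w - 3*w + 2"
proof -
  have u: "u = w - k" and z: "z = w + k - 5" using assms by auto
  have b: "b = 2 - c" using assms by simp
  have a: "a = 2 - b*(k-5) + c*k + k*k - 5*k" using assms by simp
  show ?thesis unfolding u z a b by (simp add: algebra_simps)
qed

lemma ar2:
  fixes a b c k u z w :: int
  assumes "b + c = 1" "a + b*(k-5) - c*k = 0" "u + k = w" "z + 5 - k = w"
  shows "a + b*z + c*u = w"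
proof -
  have u: "u = w - k" and z: "z = w + k - 5" using assms by auto
  have b: "b = 1 - c" using assms by simp
  have a: "a = - b*(k-5) + c*k" using assms by simp
  show ?thesis unfolding u z a b by (simp add: algebra_simps)
qed


lemma ones_append: "ones (xs @ ys) = ones xs \<union> (\<lambda>k. k + length xs) ` ones ys"
proof (rule set_eqI)
  fix k
  show "k \<in> ones (xs @ ys) \<longleftrightarrow> k \<in> ones xs \<union> (\<lambda>k. k + length xs) ` ones ys"
  proof (cases "k < length xs")
    case True thus ?thesis by (auto simp: ones_def nth_append)
  next
    case False
    have "k \<in> ones (xs @ ys) \<longleftrightarrow> k - length xs \<in> ones ys"
      using False by (auto simp: ones_def nth_append)
    moreover have "k \<notin> ones xs" using False ones_sub[of xs] by auto
    moreover have "k \<in> (\<lambda>k. k + length xs) ` ones ys \<longleftrightarrow> k - length xs \<in> ones ys"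
    proof
      assume "k - length xs \<in> ones ys"
      moreover have "k = (k - length xs) + length xs" using False by simp
      ultimately show "k \<in> (\<lambda>k. k + length xs) ` ones ys" by (rule rev_image_eqI)
    qed auto
    ultimately show ?thesis by blast
  qed
qed

lemma card_ones_append: "card (ones (xs @ ys)) = card (ones xs) + card (ones ys)"
proof -
  have "ones xs \<inter> (\<lambda>k. k + length xs) ` ones ys = {}" using ones_sub[of xs] by auto
  moreover have "inj_on (\<lambda>k. k + length xs) (ones ys)" by (auto simp: inj_on_def)
  ultimately show ?thesis unfolding ones_append
    by (simp add: card_Un_disjoint ones_finite card_image)
qed

lemma ones_rep0: "ones (replicate n 0) = {}" by (auto simp: ones_def)
lemma ones_rep1: "ones (replicate n (Suc 0)) = {..<n}" by (auto simp: ones_def)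

lemma card_ones_5: "set p \<subseteq> {0,1} \<Longrightarrow> length p = 5 \<Longrightarrow> w \<ge> 3 \<Longrightarrow>
   p @ replicate (w-2) 0 @ replicate (w-3) 1 \<in> johnson_vertices (2*w) (card (ones p) + (w - 3))"
  by (auto simp: johnson_vertices_def card_ones_append ones_rep0 ones_rep1)

lemma ones_11100: "ones [1,1,1,0,0] = {0,1,2}"
  by (auto simp: ones_def less_Suc_eq numeral_eq_Suc)
lemma ones_11010: "ones [1,1,0,1,0] = {0,1,3}"
  by (auto simp: ones_def less_Suc_eq numeral_eq_Suc)

theorem mainTheorem3:
  fixes w :: nat
  assumes "w \<ge> 3"
  shows "equitable_partition (johnson_vertices (2*w) w) (johnson_adj w) 2
           (\<lambda>i. if i = 1 then C1 w else C2 w)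
           (\<lambda>i j. if i = 1 then (if j = 1 then w^2 - 3*w + 2 else 3*w - 2)
                  else (if j = 1 then w else w^2 - w))"
proof -
  let ?V = "johnson_vertices (2*w) w"
  have w1: "w \<ge> 1" using assms by simp
  have h3: "3*w \<le> w^2" using assms by (simp add: power2_eq_square)
  have finV: "finite ?V"
  proof -
    have "?V \<subseteq> {xs. set xs \<subseteq> {0,1} \<and> length xs = 2*w}" by (auto simp: johnson_vertices_def)
    thus ?thesis using finite_lists_length_eq[of "{0::nat,1}" "2*w"] finite_subset by blast
  qed
  have C1sub: "C1 w \<subseteq> ?V" by (auto simp: C1_def)
  have vx: "length x = 2*w" "set x \<subseteq> {0,1}" "card (ones x) = w" if "x \<in> ?V" for x
    using that by (auto simp: johnson_vertices_def)
  have deg: "card {y\<in>?V. johnson_adj w x y} = w*w" if x: "x \<in> ?V" for x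
  proof -
    have "card {y\<in>?V. johnson_adj w x y}
        = card {(i,j). i \<in> ones x \<and> j \<in> {..<2*w} - ones x \<and> (\<lambda>_. True) (swap x i j)}"
      using nbr_count[OF x w1, of "\<lambda>_. True"] by simp
    also have "{(i,j). i \<in> ones x \<and> j \<in> {..<2*w} - ones x \<and> (\<lambda>_. True) (swap x i j)}
        = ones x \<times> ({..<2*w} - ones x)" by auto
    also have "card \<dots> = w * w"
      using ones_sub[of x] vx[OF x] ones_finite[of x]
      by (simp add: card_cartesian_product card_Diff_subset)
    finally show ?thesis .
  qed
  have c1: "card {y\<in>C1 w. johnson_adj w x y} = (if take 5 x \<in> B_set then w^2 - 3*w + 2 else w)"
    if x: "x \<in> ?V" for x
  proof -
    define A where "A = ones x"
    define N where "N = {..<2*w}"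
    define P where "P = A \<inter> {..<5}"
    define u where "u = card (A - P)"
    define z where "z = card (N - A - {..<5})"
    have fA: "finite A" by (simp add: A_def ones_finite)
    have AN: "A \<subseteq> N" using ones_sub[of x] vx[OF x] by (simp add: A_def N_def)
    have N5: "{..<5} \<subseteq> N" using assms by (auto simp: N_def)
    have cA: "card A = w" using vx[OF x] by (simp add: A_def)
    have key: "(take 5 (swap x i j) \<in> B_set) = ((A - {i} \<union> {j}) \<inter> {..<5} \<in> BS)"
      if "i \<in> A" "j < 2*w" "j \<notin> A" for i j
    proof -
      have "ones (swap x i j) = A - {i} \<union> {j}"
        using ones_swap[of i x j] that vx[OF x] by (simp add: A_def)
      moreover have "length (swap x i j) \<ge> 5" using vx[OF x] assms by simp
      moreover have "set (swap x i j) \<subseteq> {0,1}" using set_swap vx[OF x] by blast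
      ultimately show ?thesis using take5_B[of "swap x i j"] by simp
    qed
    have "{y\<in>C1 w. johnson_adj w x y} = {y\<in>?V. take 5 y \<in> B_set \<and> johnson_adj w x y}"
      by (auto simp: C1_def)
    hence "card {y\<in>C1 w. johnson_adj w x y}
       = card {(i,j). i \<in> ones x \<and> j \<in> {..<2*w} - ones x \<and> take 5 (swap x i j) \<in> B_set}"
      using nbr_count[OF x w1, of "\<lambda>y. take 5 y \<in> B_set"] by simp
    also have "{(i,j). i \<in> ones x \<and> j \<in> {..<2*w} - ones x \<and> take 5 (swap x i j) \<in> B_set}
       = {(i,j). i \<in> A \<and> j \<in> N - A \<and> (A - {i} \<union> {j}) \<inter> {..<5} \<in> BS}"
      using key by (auto simp: A_def N_def)
    also have "card \<dots> = ca P + cb P * z + cc P * u + (if P \<in> BS then u * z else 0)"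
      unfolding P_def u_def z_def by (rule pair_count) (use AN N5 in \<open>auto simp: N_def\<close>)
    finally have cnt: "card {y\<in>C1 w. johnson_adj w x y}
        = ca P + cb P * z + cc P * u + (if P \<in> BS then u * z else 0)" .
    have PA: "P \<subseteq> A" by (auto simp: P_def)
    have fP: "finite P" using fA PA finite_subset by blast
    have hk: "u + card P = w"
      using card_Diff_subset[OF fP PA] card_mono[OF fA PA] cA by (simp add: u_def)
    have NA: "N - A = ({..<5} - P) \<union> (N - A - {..<5})" using N5 by (auto simp: P_def)
    have "card (N - A) = w" using card_Diff_subset[OF fA AN] cA by (simp add: N_def)
    moreover have "card (N - A) = card ({..<5} - P) + z"
      unfolding z_def by (subst NA, rule card_Un_disjoint) (auto simp: N_def)
    moreover have "card ({..<5::nat} - P) = 5 - card P"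
      using card_Diff_subset[of P "{..<5::nat}"] fP by (simp add: P_def)
    moreover have "card P \<le> 5" using card_mono[of "{..<5::nat}" P] by (simp add: P_def)
    ultimately have hz: "z + 5 = w + card P" by simp
    have PPow: "P \<in> Pow {..<5}" by (auto simp: P_def)
    have tk: "(take 5 x \<in> B_set) = (P \<in> BS)"
      using take5_B[of x] vx[OF x] assms by (simp add: P_def A_def)
    have chk: "if P \<in> BS then int (cb P) + int (cc P) = 2 \<and>
       int (ca P) + int (cb P) * (int (card P) - 5) - int (cc P) * int (card P) - int (card P) * int (card P) + 5 * int (card P) = 2
       else int (cb P) + int (cc P) = 1 \<and> int (ca P) + int (cb P) * (int (card P) - 5) - int (cc P) * int (card P) = 0"
      using bspec[OF check PPow] .
    have iu: "int u + int (card P) = int w" using hk by simp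
    have iz: "int z + 5 - int (card P) = int w" using hz by simp
    show ?thesis
    proof (cases "P \<in> BS")
      case True
      hence c: "int (cb P) + int (cc P) = 2"
        "int (ca P) + int (cb P) * (int (card P) - 5) - int (cc P) * int (card P) - int (card P) * int (card P) + 5 * int (card P) = 2"
        using chk by auto
      have e1: "int (ca P + cb P * z + cc P * u + u * z) = int w * int w - 3 * int w + 2"
        using ar1[OF c iu iz] by simp
      have e2: "int (w^2 - 3*w + 2) = int w * int w - 3 * int w + 2"
        using h3 by (simp add: of_nat_diff power2_eq_square)
      have "ca P + cb P * z + cc P * u + u * z = w^2 - 3*w + 2"
        using e1 e2 by (metis of_nat_eq_iff)
      thus ?thesis using cnt tk True by simp
    next
      case False
      hence c: "int (cb P) + int (cc P) = 1"
        "int (ca P) + int (cb P) * (int (card P) - 5) - int (cc P) * int (card P) = 0"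
        using chk by auto
      have "int (ca P + cb P * z + cc P * u) = int w"
        using ar2[OF c iu iz] by simp
      hence "ca P + cb P * z + cc P * u = w" by (metis of_nat_eq_iff)
      thus ?thesis using cnt tk False by simp
    qed
  qed
  have c2: "card {y\<in>C2 w. johnson_adj w x y} = w*w - card {y\<in>C1 w. johnson_adj w x y}"
    if x: "x \<in> ?V" for x
  proof -
    have e: "{y\<in>C2 w. johnson_adj w x y} = {y\<in>?V. johnson_adj w x y} - {y\<in>C1 w. johnson_adj w x y}"
      by (auto simp: C2_def)
    have sub: "{y\<in>C1 w. johnson_adj w x y} \<subseteq> {y\<in>?V. johnson_adj w x y}" using C1sub by auto
    have fin: "finite {y\<in>C1 w. johnson_adj w x y}" by (rule finite_subset[OF _ finV]) (use C1sub in auto)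
    have "card {y\<in>C2 w. johnson_adj w x y} = card {y\<in>?V. johnson_adj w x y} - card {y\<in>C1 w. johnson_adj w x y}"
      unfolding e by (rule card_Diff_subset[OF fin sub])
    thus ?thesis using deg[OF x] by simp
  qed
  define p where "p = [1,1,1,0,0::nat]"
  define q where "q = [1,1,0,1,0::nat]"
  define tl where "tl = replicate (w-2) (0::nat) @ replicate (w-3) 1"
  have vp: "p @ tl \<in> johnson_vertices (2*w) (card (ones p) + (w - 3))"
    unfolding p_def tl_def by (rule card_ones_5) (use assms in auto)
  have vq: "q @ tl \<in> johnson_vertices (2*w) (card (ones q) + (w - 3))"
    unfolding q_def tl_def by (rule card_ones_5) (use assms in auto)
  have cp: "card (ones p) = 3" unfolding p_def ones_11100 by simp
  have cq: "card (ones q) = 3" unfolding q_def ones_11010 by simp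
  have pV: "p @ tl \<in> ?V" using vp cp assms by simp
  have qV: "q @ tl \<in> ?V" using vq cq assms by simp
  have pC1: "p @ tl \<in> C1 w" using pV by (simp add: C1_def p_def B_set_def)
  have qC2: "q @ tl \<in> C2 w" using qV by (simp add: C2_def C1_def q_def B_set_def)
  have I: "{1..2::nat} = {1,2}" by auto
  show ?thesis
    unfolding equitable_partition_def I
  proof (intro conjI)
    show "(\<Union>i\<in>{1,2::nat}. if i = 1 then C1 w else C2 w) = ?V" using C1sub by (auto simp: C2_def)
    show "\<forall>i\<in>{1,2::nat}. (if i = 1 then C1 w else C2 w) \<noteq> {}" using pC1 qC2 by auto
    show "\<forall>i\<in>{1,2::nat}. \<forall>j\<in>{1,2::nat}. i \<noteq> j \<longrightarrow>
       (if i = 1 then C1 w else C2 w) \<inter> (if j = 1 then C1 w else C2 w) = {}"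
      by (auto simp: C2_def)
    have x1: "x \<in> ?V" "take 5 x \<in> B_set" if "x \<in> C1 w" for x using that by (auto simp: C1_def)
    have x2: "x \<in> ?V" "take 5 x \<notin> B_set" if "x \<in> C2 w" for x using that by (auto simp: C1_def C2_def)
    have ww: "w * w = w^2" by (simp add: power2_eq_square)
    show "\<forall>i\<in>{1,2::nat}. \<forall>j\<in>{1,2::nat}. \<forall>x\<in>(if i = 1 then C1 w else C2 w).
       card {y \<in> (if j = 1 then C1 w else C2 w). johnson_adj w x y} =
       (if i = 1 then (if j = 1 then w^2 - 3*w + 2 else 3*w - 2) else (if j = 1 then w else w^2 - w))"
    proof (intro ballI)
      fix i j x assume i: "i \<in> {1,2::nat}" and j: "j \<in> {1,2::nat}"
        and x: "x \<in> (if i = 1 then C1 w else C2 w)"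
      show "card {y \<in> (if j = 1 then C1 w else C2 w). johnson_adj w x y} =
       (if i = 1 then (if j = 1 then w^2 - 3*w + 2 else 3*w - 2) else (if j = 1 then w else w^2 - w))"
      proof (cases "i = 1")
        case True
        hence xc: "x \<in> ?V" "take 5 x \<in> B_set" using x x1 by auto
        show ?thesis
        proof (cases "j = 1")
          case True thus ?thesis using c1[OF xc(1)] xc(2) \<open>i = 1\<close> by simp
        next
          case False thus ?thesis using c1[OF xc(1)] c2[OF xc(1)] xc(2) \<open>i = 1\<close> h3 ww assms
            by simp
        qed
      next
        case False
        hence xc: "x \<in> ?V" "take 5 x \<notin> B_set" using x x2 by auto
        show ?thesis
        proof (cases "j = 1")
          case True thus ?thesis using c1[OF xc(1)] xc(2) \<open>i \<noteq> 1\<close> by simp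
        next
          case False thus ?thesis using c1[OF xc(1)] c2[OF xc(1)] xc(2) \<open>i \<noteq> 1\<close> ww
            by simp
        qed
      qed
    qed
  qed
qed

end
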